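(* Let $\mathcal{A}\in\mathbb{R}^{d\times\cdots\times d}$ be an order-$k$ real tensor with the same dimension $d$ in all modes. For every level $1\le\ell\le k$, \[ d^{-(k-\lceil k/\ell\rceil)/2}\|\mathcal{A}\|_F\le\min_{\pi\in\mathcal{P}^\ell_{[k]}}\|\mathrm{Unfold}_\pi(\mathcal{A})\|_\sigma . \]
   Context: $\|\mathcal{A}\|_F$ is the Frobenius norm. For a real tensor $\mathcal{T}\in\mathbb{R}^{e_1\times\cdots\times e_m}$, $\|\mathcal{T}\|_\sigma=\sup\{\sum t_{i_1\dots i_m}x^{(1)}_{i_1}\cdots x^{(m)}_{i_m}:\ \mathbf{x}_n\in\mathbb{R}^{e_n},\ \|\mathbf{x}_n\|_2=1\}$. $\mathcal{P}^\ell_{[k]}$ is the set of partitions of $[k]$ into exactly $\ell$ nonempty blocks. Unfolding: for $\pi=\{B_1,\dots,B_\ell\}$, $\mathrm{Unfold}_\pi(\mathcal{A})$ is the order-$\ell$ tensor of dimensions $(d^{|B_1|},\dots,d^{|B_\ell|})$ whose entry at $(m_1,\dots,m_\ell)$ is $a_{i_1\dots i_k}$, where $m_j$ corresponds to $(i_r)_{r\in B_j}$ under a fixed bijection $[d]^{B_j}\to[d^{|B_j|}]$. *)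

theory Defs
  imports "HOL-Analysis.Analysis" "HOL-Library.Disjoint_Sets"
begin

text \<open>An order-m tensor
with dimensions es (a list of length m) only uses its values on the index tuples
below (0-based indices). Modes are numbered 0..k-1.\<close>

definition tuples :: "nat list \<Rightarrow> nat list set" where
  "tuples es = {idx. length idx = length es \<and> (\<forall>n<length es. idx ! n < es ! n)}"

definition frob_norm :: "nat \<Rightarrow> nat \<Rightarrow> (nat list \<Rightarrow> real) \<Rightarrow> real" where
  "frob_norm d k A = sqrt (\<Sum>idx\<in>tuples (replicate k d). (A idx)^2)"

definition spectral_norm :: "nat list \<Rightarrow> (nat list \<Rightarrow> real) \<Rightarrow> real" where
  "spectral_norm es T = Sup {(\<Sum>idx\<in>tuples es. T idx * (\<Prod>n<length es. x n (idx ! n))) | x.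
       \<forall>n<length es. (\<Sum>i<es ! n. (x n i)^2) = 1}"

definition set_partitions :: "nat \<Rightarrow> nat \<Rightarrow> nat set set set" where
  "set_partitions k l = {P. partition_on {..<k} P \<and> card P = l}"

definition blocks :: "nat set set \<Rightarrow> nat set list" where
  "blocks P = sorted_key_list_of_set Min P"

definition unfold_dims :: "nat \<Rightarrow> nat set set \<Rightarrow> nat list" where
  "unfold_dims d P = map (\<lambda>B. d ^ card B) (blocks P)"

text \<open>Fixed bijection [d]^B \<rightarrow> [d^|B|]: if B = {r_0 < ... < r_{s-1}}, the multi-index
(i_r) is sent to sum_t i_{r_t} d^t. The unfolding entry at (m_1..m_l) is the entry
of A at the multi-index obtained by inverting this bijection blockwise.\<close>
definition unfold :: "nat \<Rightarrow> nat \<Rightarrow> nat set set \<Rightarrow> (nat list \<Rightarrow> real) \<Rightarrow> (nat list \<Rightarrow> real)" where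
  "unfold d k P A = (\<lambda>ms. A (map (\<lambda>r.
      let bs = blocks P;
          j = (THE j. j < length bs \<and> r \<in> bs ! j);
          t = card {s \<in> bs ! j. s < r}
      in (ms ! j div d ^ t) mod d) [0..<k]))"

end

theory Submission
  imports Defs
begin


lemma digits_lt:
  fixes c :: "nat \<Rightarrow> nat"
  shows "(\<forall>u<n. c u < d) \<Longrightarrow> (\<Sum>u<n. c u * d^u) + 1 \<le> d^n"
proof (induction n)
  case 0 then show ?case by simp
next
  case (Suc n)
  then have IH: "(\<Sum>u<n. c u * d^u) + 1 \<le> d^n" and cn: "c n + 1 \<le> d" by auto
  have "(\<Sum>u<Suc n. c u * d^u) + 1 = ((\<Sum>u<n. c u * d^u) + 1) + c n * d^n" by simp
  also have "\<dots> \<le> d^n + c n * d^n" using IH by simp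
  also have "\<dots> = (c n + 1) * d^n" by simp
  also have "\<dots> \<le> d * d^n" using cn by (rule mult_right_mono) simp
  finally show ?case by simp
qed

lemma digits_nth:
  fixes c :: "nat \<Rightarrow> nat"
  shows "(\<forall>u<n. c u < d) \<Longrightarrow> t < n \<Longrightarrow> (\<Sum>u<n. c u * d^u) div d^t mod d = c t"
proof (induction n arbitrary: c t)
  case 0 then show ?case by simp
next
  case (Suc n)
  have dpos: "d > 0" using Suc.prems(1) by (metis gr_zeroI less_nat_zero_code zero_less_Suc)
  have eq: "(\<Sum>u<Suc n. c u * d^u) = c 0 + d * (\<Sum>u<n. c (Suc u) * d^u)"
    unfolding sum.lessThan_Suc_shift by (simp add: sum_distrib_left mult.assoc mult.left_commute)
  show ?case
  proof (cases t)
    case 0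
    then show ?thesis using eq Suc.prems by simp
  next
    case (Suc t')
    have c0: "c 0 < d" using Suc.prems by simp
    have "(c 0 + d * (\<Sum>u<n. c (Suc u) * d^u)) div d = (\<Sum>u<n. c (Suc u) * d^u)"
      using c0 dpos by simp
    then have "(\<Sum>u<Suc n. c u * d^u) div d^t = (\<Sum>u<n. c (Suc u) * d^u) div d^t'"
      using eq Suc by (simp add: div_mult2_eq)
    moreover have "(\<Sum>u<n. c (Suc u) * d^u) div d^t' mod d = c (Suc t')"
      using Suc.IH[of "\<lambda>u. c (Suc u)" t'] Suc.prems \<open>t = Suc t'\<close> by simp
    ultimately show ?thesis using Suc by simp
  qed
qed

definition rank :: "nat set \<Rightarrow> nat \<Rightarrow> nat" where
  "rank B s = card {s' \<in> B. s' < s}"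

lemma rank_bij:
  assumes "finite B"
  shows "bij_betw (rank B) B {..<card B}"
proof -
  have lt: "rank B s < card B" if "s \<in> B" for s
    unfolding rank_def using that assms by (intro psubset_card_mono) auto
  have mono: "rank B s < rank B s'" if "s \<in> B" "s' \<in> B" "s < s'" for s s'
    unfolding rank_def using that assms by (intro psubset_card_mono) auto
  have inj: "inj_on (rank B) B"
  proof (rule inj_onI)
    fix s s' assume "s \<in> B" "s' \<in> B" "rank B s = rank B s'"
    then show "s = s'" using mono[of s s'] mono[of s' s] by (metis less_irrefl nat_neq_iff)
  qed
  have sub: "rank B ` B \<subseteq> {..<card B}" using lt by auto
  have "card (rank B ` B) = card {..<card B}" using card_image[OF inj] by simp
  then have "rank B ` B = {..<card B}" using sub by (intro card_subset_eq) auto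
  then show ?thesis using inj by (simp add: bij_betw_def)
qed

lemma digits_set:
  fixes c :: "nat \<Rightarrow> nat"
  assumes "finite B" "\<forall>s\<in>B. c s < d"
  shows "(\<Sum>s\<in>B. c s * d^rank B s) < d ^ card B"
    and "r \<in> B \<Longrightarrow> (\<Sum>s\<in>B. c s * d^rank B s) div d ^ rank B r mod d = c r"
proof -
  define h where "h = the_inv_into B (rank B)"
  have bij: "bij_betw (rank B) B {..<card B}" using rank_bij[OF assms(1)] .
  have hinv: "h (rank B s) = s" if "s \<in> B" for s
    unfolding h_def using bij that by (simp add: bij_betw_def the_inv_into_f_f)
  have hin: "h u \<in> B" if "u < card B" for u
    unfolding h_def using bij that by (metis bij_betw_def lessThan_iff the_inv_into_into subset_refl)
  have eq: "(\<Sum>s\<in>B. c s * d^rank B s) = (\<Sum>u<card B. c (h u) * d^u)"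
    using sum.reindex_bij_betw[OF bij, of "\<lambda>u. c (h u) * d^u", symmetric] hinv
    by (simp cong: sum.cong)
  have cb: "\<forall>u<card B. c (h u) < d" using hin assms(2) by auto
  show "(\<Sum>s\<in>B. c s * d^rank B s) < d ^ card B" using digits_lt[OF cb] eq by simp
  show "(\<Sum>s\<in>B. c s * d^rank B s) div d ^ rank B r mod d = c r" if "r \<in> B"
    using digits_nth[OF cb, of "rank B r"] eq hinv[OF that] bij that
    by (auto simp: bij_betw_def)
qed



lemma tuples_Nil: "tuples [] = {[]}" by (auto simp: tuples_def)

lemma tuples_Cons: "tuples (e # es) = (\<lambda>(i,xs). i # xs) ` ({..<e} \<times> tuples es)"
proof (rule set_eqI)
  fix ys
  show "ys \<in> tuples (e # es) \<longleftrightarrow> ys \<in> (\<lambda>(i,xs). i # xs) ` ({..<e} \<times> tuples es)"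
  proof (cases ys)
    case Nil then show ?thesis by (auto simp: tuples_def)
  next
    case (Cons y ys')
    have "ys \<in> tuples (e # es) \<longleftrightarrow> y < e \<and> ys' \<in> tuples es"
      unfolding Cons tuples_def by (auto simp: All_less_Suc2)
    then show ?thesis using Cons by auto
  qed
qed

lemma tuples_fin_card: "finite (tuples es) \<and> card (tuples es) = prod_list es"
proof (induction es)
  case Nil then show ?case by (simp add: tuples_Nil)
next
  case (Cons e es)
  have inj: "inj_on (\<lambda>(i,xs). i # (xs::nat list)) ({..<e} \<times> tuples es)"
    by (auto simp: inj_on_def)
  show ?case using Cons unfolding tuples_Cons
    by (simp add: card_image[OF inj] card_cartesian_product)
qed

lemma tuples_upd: "m \<in> tuples es \<Longrightarrow> j < length es \<Longrightarrow> i < es ! j \<Longrightarrow> m[j:=i] \<in> tuples es"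
  by (auto simp: tuples_def nth_list_update)

lemma spectral_bdd:
  fixes T :: "nat list \<Rightarrow> real"
  shows
  "bdd_above {(\<Sum>idx\<in>tuples es. T idx * (\<Prod>n<length es. x n (idx ! n))) | x.
       \<forall>n<length es. (\<Sum>i<es ! n. (x n i)^2) = 1}"
proof (rule bdd_aboveI[where M = "\<Sum>idx\<in>tuples es. \<bar>T idx\<bar>"])
  fix v assume "v \<in> {(\<Sum>idx\<in>tuples es. T idx * (\<Prod>n<length es. x n (idx ! n))) | x.
       \<forall>n<length es. (\<Sum>i<es ! n. (x n i)^2) = 1}"
  then obtain x where v: "v = (\<Sum>idx\<in>tuples es. T idx * (\<Prod>n<length es. x n (idx ! n)))"
    and u: "\<forall>n<length es. (\<Sum>i<es ! n. (x n i)^2) = 1" by blast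
  have xb: "\<bar>x n i\<bar> \<le> 1" if "n < length es" "i < es ! n" for n i
  proof -
    have "(x n i)^2 \<le> (\<Sum>i<es ! n. (x n i)^2)"
      using that by (intro member_le_sum) auto
    then have "(x n i)^2 \<le> 1" using u that by simp
    then show ?thesis by (simp add: abs_square_le_1)
  qed
  have "T idx * (\<Prod>n<length es. x n (idx ! n)) \<le> \<bar>T idx\<bar>" if "idx \<in> tuples es" for idx
  proof -
    have "\<bar>\<Prod>n<length es. x n (idx ! n)\<bar> \<le> 1"
      unfolding abs_prod using xb that by (intro prod_le_1) (auto simp: tuples_def)
    then have "\<bar>T idx * (\<Prod>n<length es. x n (idx ! n))\<bar> \<le> \<bar>T idx\<bar>"
      by (simp add: abs_mult mult_left_le)
    then show ?thesis by linarith
  qed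
  then show "v \<le> (\<Sum>idx\<in>tuples es. \<bar>T idx\<bar>)" unfolding v by (rule sum_mono)
qed

lemma spectral_fiber:
  assumes pos: "\<forall>n<length es. es ! n \<ge> 1" and j: "j < length es" and m: "m \<in> tuples es"
  shows "sqrt (\<Sum>i<es ! j. (T (m[j:=i]))^2) \<le> spectral_norm es T"
proof -
  define F where "F = (\<Sum>i<es ! j. (T (m[j:=i]))^2)"
  define v where "v i = (if F = 0 then (if i = 0 then 1 else 0) else T (m[j:=i]) / sqrt F)" for i
  define x where "x n i = (if n = j then v i else (if i = m ! n then 1 else 0))" for n i
  have F0: "F \<ge> 0" unfolding F_def by (intro sum_nonneg) simp
  have unit: "\<forall>n<length es. (\<Sum>i<es ! n. (x n i)^2) = 1"
  proof (intro allI impI)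
    fix n assume n: "n < length es"
    show "(\<Sum>i<es ! n. (x n i)^2) = 1"
    proof (cases "n = j")
      case True
      show ?thesis
      proof (cases "F = 0")
        case True
        have "(\<Sum>i<es ! n. (x n i)^2) = (\<Sum>i<es ! n. if i = 0 then 1 else 0)"
          using \<open>n = j\<close> True by (intro sum.cong) (auto simp: x_def v_def)
        also have "\<dots> = 1" using pos n by (simp add: Suc_le_eq)
        finally show ?thesis .
      next
        case False
        have "(\<Sum>i<es ! n. (x n i)^2) = (\<Sum>i<es ! j. (T (m[j:=i]))^2 / F)"
          using \<open>n = j\<close> False F0 by (intro sum.cong) (auto simp: x_def v_def power_divide)
        also have "\<dots> = F / F" by (simp only: F_def sum_divide_distrib)
        also have "\<dots> = 1" using False by simp
        finally show ?thesis .
      qed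
    next
      case False
      have mn: "m ! n < es ! n" using m n by (auto simp: tuples_def)
      have "(\<Sum>i<es ! n. (x n i)^2) = (\<Sum>i<es ! n. if i = m ! n then 1 else 0)"
        using False by (intro sum.cong) (auto simp: x_def)
      also have "\<dots> = 1" using mn by simp
      finally show ?thesis .
    qed
  qed
  define Im where "Im = (\<lambda>i. m[j:=i]) ` {..<es ! j}"
  have lenm: "length m = length es" using m by (simp add: tuples_def)
  have prodx: "(\<Prod>n<length es. x n (idx ! n)) = (if idx \<in> Im then v (idx ! j) else 0)"
    if idx: "idx \<in> tuples es" for idx
  proof -
    have leni: "length idx = length es" using idx by (simp add: tuples_def)
    have split: "(\<Prod>n<length es. x n (idx ! n)) = x j (idx ! j) * (\<Prod>n\<in>{..<length es} - {j}. x n (idx ! n))"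
      using j by (subst prod.remove[of _ j]) auto
    show ?thesis
    proof (cases "\<forall>n<length es. n \<noteq> j \<longrightarrow> idx ! n = m ! n")
      case True
      have "idx = m[j := idx ! j]"
        using True leni lenm j by (intro nth_equalityI) (auto simp: nth_list_update split: if_splits)
      moreover have "idx ! j < es ! j" using idx j by (auto simp: tuples_def)
      ultimately have "idx \<in> Im" unfolding Im_def by blast
      moreover have "(\<Prod>n\<in>{..<length es} - {j}. x n (idx ! n)) = 1"
        using True by (intro prod.neutral) (auto simp: x_def)
      ultimately show ?thesis using split by (simp add: x_def)
    next
      case False
      then obtain n where n: "n < length es" "n \<noteq> j" "idx ! n \<noteq> m ! n" by blast
      have "idx \<notin> Im" using n unfolding Im_def by (auto simp: nth_list_update)
      moreover have "(\<Prod>n\<in>{..<length es} - {j}. x n (idx ! n)) = 0"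
        using n by (intro prod_zero) (auto simp: x_def intro!: bexI[of _ n])
      ultimately show ?thesis using split by simp
    qed
  qed
  have Imsub: "Im \<subseteq> tuples es" unfolding Im_def using tuples_upd[OF m j] by auto
  have fin: "finite (tuples es)" using tuples_fin_card by blast
  have injm: "inj_on (\<lambda>i. m[j:=i]) {..<es ! j}"
    by (rule inj_onI) (metis j lenm nth_list_update_eq)
  have val: "(\<Sum>idx\<in>tuples es. T idx * (\<Prod>n<length es. x n (idx ! n))) = sqrt F"
  proof -
    have "(\<Sum>idx\<in>tuples es. T idx * (\<Prod>n<length es. x n (idx ! n)))
        = (\<Sum>idx\<in>tuples es. if idx \<in> Im then T idx * v (idx ! j) else 0)"
      using prodx by (intro sum.cong) auto
    also have "\<dots> = (\<Sum>idx\<in>Im. T idx * v (idx ! j))"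
      using fin Imsub by (simp add: sum.inter_restrict[symmetric] Int_absorb1)
    also have "\<dots> = (\<Sum>i<es ! j. T (m[j:=i]) * v i)"
      unfolding Im_def using j lenm by (simp add: sum.reindex[OF injm])
    also have "\<dots> = sqrt F"
    proof (cases "F = 0")
      case True
      have "\<forall>i<es ! j. T (m[j:=i]) = 0"
        using True unfolding F_def by (simp add: sum_nonneg_eq_0_iff)
      then show ?thesis using True by simp
    next
      case False
      have "(\<Sum>i<es ! j. T (m[j:=i]) * v i) = (\<Sum>i<es ! j. (T (m[j:=i]))^2) / sqrt F"
        using False by (simp add: v_def sum_divide_distrib power2_eq_square)
      also have "\<dots> = F / sqrt F" by (simp add: F_def)
      also have "\<dots> = sqrt F" using F0 False by (simp add: real_div_sqrt)
      finally show ?thesis .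
    qed
    finally show ?thesis .
  qed
  have "sqrt F \<in> {(\<Sum>idx\<in>tuples es. T idx * (\<Prod>n<length es. x n (idx ! n))) | x.
       \<forall>n<length es. (\<Sum>i<es ! n. (x n i)^2) = 1}"
    using val unit by force
  then show ?thesis unfolding F_def spectral_norm_def F_def
    using cSup_upper[OF _ spectral_bdd] unfolding F_def by blast
qed

lemma sum_involution:
  fixes g :: "nat list \<Rightarrow> real"
  assumes j: "j < length es"
  shows "(\<Sum>m\<in>tuples es. \<Sum>i<es ! j. g (m[j:=i])) = real (es ! j) * (\<Sum>m\<in>tuples es. g m)"
proof -
  have fin: "finite (tuples es)" using tuples_fin_card by blast
  let ?S = "tuples es \<times> {..<es ! j}"
  have "(\<Sum>m\<in>tuples es. \<Sum>i<es ! j. g (m[j:=i])) = (\<Sum>(m,i)\<in>?S. g (m[j:=i]))"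
    using fin by (simp add: sum.cartesian_product)
  also have "\<dots> = (\<Sum>(m,i)\<in>?S. g m)"
  proof (rule sum.reindex_bij_witness[where i = "\<lambda>(m,i). (m[j:=i], m ! j)" and j = "\<lambda>(m,i). (m[j:=i], m ! j)"])
    fix a assume "a \<in> ?S"
    then show "(case case a of (m, i) \<Rightarrow> (m[j := i], m ! j) of (m, i) \<Rightarrow> (m[j := i], m ! j)) = a"
      using j by (cases a) (auto simp: tuples_def)
  next
    fix a assume "a \<in> ?S"
    then show "(case a of (m, i) \<Rightarrow> (m[j := i], m ! j)) \<in> ?S"
      using j tuples_upd by (cases a) (auto simp: tuples_def nth_list_update)
  next
    fix a assume "a \<in> ?S"
    then show "(case case a of (m, i) \<Rightarrow> (m[j := i], m ! j) of (m, i) \<Rightarrow> (m[j := i], m ! j)) = a"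
      using j by (cases a) (auto simp: tuples_def)
  next
    fix a assume "a \<in> ?S"
    then show "(case a of (m, i) \<Rightarrow> (m[j := i], m ! j)) \<in> ?S"
      using j tuples_upd by (cases a) (auto simp: tuples_def nth_list_update)
  next
    fix a assume "a \<in> ?S"
    then show "(case case a of (m, i) \<Rightarrow> (m[j := i], m ! j) of (m, i) \<Rightarrow> g m) = (case a of (m, i) \<Rightarrow> g (m[j := i]))"
      by (cases a) auto
  qed
  also have "\<dots> = (\<Sum>m\<in>tuples es. \<Sum>i<es ! j. g m)"
    by (subst sum.cartesian_product) (rule refl)
  also have "\<dots> = real (es ! j) * (\<Sum>m\<in>tuples es. g m)"
    by (simp add: sum_distrib_left)
  finally show ?thesis .
qed



context linorder begin
lemma skl_props:
  assumes "inj_on f S" "A \<subseteq> S" "finite A"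
  shows "set (sorted_key_list_of_set f A) = A \<and> distinct (sorted_key_list_of_set f A)
     \<and> length (sorted_key_list_of_set f A) = card A"
proof -
  interpret folding_insort_key "(\<le>)" "(<)" S f by unfold_locales (rule assms(1))
  show ?thesis using assms distinct_sorted_key_list_of_set[OF assms(2)]
    by (simp add: distinct_map)
qed
end

lemma blocks_props:
  assumes part: "partition_on {..<k} P"
  shows "set (blocks P) = P" "distinct (blocks P)" "length (blocks P) = card P" "finite P"
    "\<And>B. B \<in> P \<Longrightarrow> finite B \<and> B \<subseteq> {..<k} \<and> B \<noteq> {}"
proof -
  have U: "\<Union>P = {..<k}" using partition_onD1[OF part] by simp
  show fB: "\<And>B. B \<in> P \<Longrightarrow> finite B \<and> B \<subseteq> {..<k} \<and> B \<noteq> {}"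
    using U partition_onD3[OF part] by (metis Sup_upper finite_lessThan finite_subset)
  show finP: "finite P" using U by (metis finite_UnionD finite_lessThan)
  have inj: "inj_on Min P"
  proof (rule inj_onI)
    fix B B' assume BB: "B \<in> P" "B' \<in> P" "Min B = Min B'"
    then have "Min B \<in> B" "Min B \<in> B'" using fB by (metis Min_in)+
    then show "B = B'" using partition_onD2[OF part] BB by (meson disjointD disjoint_iff)
  qed
  have "set (blocks P) = P \<and> distinct (blocks P) \<and> length (blocks P) = card P"
    unfolding blocks_def using skl_props[OF inj subset_refl finP] .
  then show "set (blocks P) = P" "distinct (blocks P)" "length (blocks P) = card P" by auto
qed



lemma main_P:
  fixes A :: "nat list \<Rightarrow> real"
  assumes d1: "d \<ge> 1" and l1: "1 \<le> l" and P: "P \<in> set_partitions k l"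
  shows "real d powr (- (real k - of_int \<lceil>real k / real l\<rceil>) / 2) * frob_norm d k A
         \<le> spectral_norm (unfold_dims d P) (unfold d k P A)"
proof -
  have part: "partition_on {..<k} P" and cP: "card P = l" using P by (auto simp: set_partitions_def)
  note bp = blocks_props[OF part]
  define bs where "bs = blocks P"
  define es where "es = unfold_dims d P"
  define T where "T = unfold d k P A"
  have les: "length es = l" unfolding es_def unfold_dims_def using bp cP by simp
  have lbs: "length bs = l" unfolding bs_def using bp cP by simp
  have esn: "es ! n = d ^ card (bs ! n)" if "n < l" for n
    unfolding es_def unfold_dims_def bs_def using that lbs bs_def by simp
  have bsP: "bs ! n \<in> P" if "n < l" for n using that lbs bp(1) unfolding bs_def by (metis nth_mem)
  have disj: "disjoint P" using partition_onD2[OF part] .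
  have U: "\<Union>P = {..<k}" using partition_onD1[OF part] by simp
  have sumcard: "(\<Sum>B\<in>P. card B) = k"
  proof -
    have "card (\<Union>P) = (\<Sum>B\<in>P. card B)"
      using disj bp(5) by (intro card_Union_disjoint) auto
    then show ?thesis using U by simp
  qed
  have prodes: "prod_list es = d ^ k"
  proof -
    have "prod_list es = prod_list (map (\<lambda>B. d ^ card B) bs)"
      unfolding es_def unfold_dims_def bs_def ..
    also have "\<dots> = d ^ sum_list (map card bs)" by (induct bs) (auto simp: power_add)
    also have "sum_list (map card bs) = (\<Sum>B\<in>P. card B)"
      using bp bs_def by (simp add: sum_list_distinct_conv_sum_set)
    finally show ?thesis using sumcard by simp
  qed
  have uniq: "j = j'" if "j < l" "j' < l" "r \<in> bs ! j" "r \<in> bs ! j'" for j j' r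
  proof -
    have "bs ! j = bs ! j'"
    proof (rule ccontr)
      assume "bs ! j \<noteq> bs ! j'"
      then have "bs ! j \<inter> bs ! j' = {}" using disjointD[OF disj bsP[OF that(1)] bsP[OF that(2)]] by blast
      then show False using that by blast
    qed
    then show ?thesis using that bp(2) bs_def lbs by (simp add: nth_eq_iff_index_eq)
  qed
  have ex: "\<exists>j<l. r \<in> bs ! j" if r: "r < k" for r
  proof -
    have "r \<in> \<Union>P" using U r by simp
    then obtain B where "B \<in> P" "r \<in> B" by blast
    then show ?thesis using bp(1) bs_def lbs by (metis in_set_conv_nth)
  qed
  define J where "J r = (THE j. j < length bs \<and> r \<in> bs ! j)" for r
  have J: "J r < l \<and> r \<in> bs ! J r" if r: "r < k" for r
  proof -
    obtain j where j: "j < l" "r \<in> bs ! j" using ex[OF r] by blast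
    have "J r = j" unfolding J_def using j uniq lbs by (intro the_equality) auto
    then show ?thesis using j by simp
  qed
  define enc where "enc idx = map (\<lambda>B. \<Sum>s\<in>B. idx ! s * d ^ rank B s) bs" for idx :: "nat list"
  have enc_in: "enc idx \<in> tuples es" if idx: "idx \<in> tuples (replicate k d)" for idx
  proof -
    have "(\<Sum>s\<in>bs ! j. idx ! s * d ^ rank (bs ! j) s) < d ^ card (bs ! j)" if j: "j < l" for j
      using bp(5)[OF bsP[OF j]] idx by (intro digits_set(1)) (auto simp: tuples_def)
    then show ?thesis using les lbs esn unfolding tuples_def enc_def by auto
  qed
  define dec where "dec ms = map (\<lambda>r. let bs = blocks P;
          j = (THE j. j < length bs \<and> r \<in> bs ! j);
          t = card {s \<in> bs ! j. s < r}
      in (ms ! j div d ^ t) mod d) [0..<k]" for ms :: "nat list"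
  have Tdec: "T ms = A (dec ms)" for ms unfolding T_def unfold_def dec_def ..
  have dec_enc: "dec (enc idx) = idx" if idx: "idx \<in> tuples (replicate k d)" for idx
  proof (rule nth_equalityI)
    show "length (dec (enc idx)) = length idx" using idx by (simp add: tuples_def dec_def)
  next
    fix r assume "r < length (dec (enc idx))"
    then have r: "r < k" by (simp add: dec_def)
    have Jr: "J r < l" "r \<in> bs ! J r" using J[OF r] by auto
    have "(enc idx ! J r div d ^ rank (bs ! J r) r) mod d = idx ! r"
      unfolding enc_def using Jr lbs bp(5)[OF bsP[OF Jr(1)]] idx
      by (simp, intro digits_set(2)) (auto simp: tuples_def)
    then show "dec (enc idx) ! r = idx ! r"
      using r by (simp add: dec_def Let_def J_def[symmetric] bs_def[symmetric] rank_def)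
  qed
  have finT: "finite (tuples es)" and cardT: "card (tuples es) = d ^ k"
    using tuples_fin_card[of es] prodes by auto
  have frob_le: "(\<Sum>idx\<in>tuples (replicate k d). (A idx)^2) \<le> (\<Sum>ms\<in>tuples es. (T ms)^2)"
  proof -
    have inj: "inj_on enc (tuples (replicate k d))"
      by (rule inj_onI) (metis dec_enc)
    have "(\<Sum>idx\<in>tuples (replicate k d). (A idx)^2) = (\<Sum>idx\<in>tuples (replicate k d). (T (enc idx))^2)"
      using dec_enc Tdec by simp
    also have "\<dots> = (\<Sum>ms\<in>enc ` tuples (replicate k d). (T ms)^2)"
      by (simp add: sum.reindex[OF inj])
    also have "\<dots> \<le> (\<Sum>ms\<in>tuples es. (T ms)^2)"
      using enc_in finT by (intro sum_mono2) auto
    finally show ?thesis .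
  qed
  have Pne: "P \<noteq> {}" using cP l1 by auto
  have "Max (card ` P) \<in> card ` P" using bp(4) Pne by (intro Max_in) auto
  then obtain B0 where B0: "B0 \<in> P" "card B0 = Max (card ` P)" by (metis imageE)
  have B0max: "card B \<le> card B0" if "B \<in> P" for B
    using B0(2) bp(4) that by simp
  obtain j0 where j0: "j0 < l" "bs ! j0 = B0"
    using B0(1) bp(1) lbs unfolding bs_def by (metis in_set_conv_nth)
  define M where "M = card B0"
  have Mk: "M \<le> k" unfolding M_def using bp(5)[OF B0(1)] by (metis card_lessThan card_mono finite_lessThan)
  have kM: "k \<le> l * M"
  proof -
    have "(\<Sum>B\<in>P. card B) \<le> card P * M" unfolding M_def using sum_bounded_above[of P card "card B0"] B0max by simp
    then show ?thesis using sumcard cP by simp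
  qed
  have ceilM: "of_int \<lceil>real k / real l\<rceil> \<le> real M"
  proof -
    have "real k \<le> real l * real M" using kM by (metis of_nat_le_iff of_nat_mult)
    then have "real k / real l \<le> real M" using l1 by (simp add: divide_le_eq mult.commute)
    then have "\<lceil>real k / real l\<rceil> \<le> int M" by (simp add: ceiling_le_iff)
    then show ?thesis by (metis of_int_le_iff of_int_of_nat_eq)
  qed
  have pos: "\<forall>n<length es. es ! n \<ge> 1" using esn les d1 by (simp add: one_le_power)
  have j0l: "j0 < length es" using j0 les by simp
  define S where "S = spectral_norm es T"
  have fib: "(\<Sum>i<es ! j0. (T (m[j0:=i]))^2) \<le> S^2" if m: "m \<in> tuples es" for m
  proof -
    have F0: "0 \<le> (\<Sum>i<es ! j0. (T (m[j0:=i]))^2)" by (intro sum_nonneg) simp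
    have "sqrt (\<Sum>i<es ! j0. (T (m[j0:=i]))^2) \<le> S"
      unfolding S_def by (rule spectral_fiber[OF pos j0l m])
    then have "(sqrt (\<Sum>i<es ! j0. (T (m[j0:=i]))^2))^2 \<le> S^2"
      using F0 by (intro power_mono) auto
    then show ?thesis using F0 by simp
  qed
  have m0: "replicate l 0 \<in> tuples es" using pos les by (auto simp: tuples_def Suc_le_eq)
  have S0: "S \<ge> 0"
    using spectral_fiber[OF pos j0l m0, of T] unfolding S_def by (meson order_trans real_sqrt_ge_zero sum_nonneg zero_le_power2)
  have "real (es ! j0) * (\<Sum>m\<in>tuples es. (T m)^2) = (\<Sum>m\<in>tuples es. \<Sum>i<es ! j0. (T (m[j0:=i]))^2)"
    using sum_involution[OF j0l, of "\<lambda>m. (T m)^2"] by simp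
  also have "\<dots> \<le> (\<Sum>m\<in>tuples es. S^2)" using fib by (rule sum_mono)
  also have "\<dots> = real (d ^ k) * S^2" using cardT by simp
  also have "\<dots> = real (d ^ M) * (real (d ^ (k - M)) * S^2)"
    using Mk by (simp add: power_add[symmetric])
  finally have "real (d ^ M) * (\<Sum>m\<in>tuples es. (T m)^2) \<le> real (d ^ M) * (real (d ^ (k - M)) * S^2)"
    using esn[OF j0(1)] j0(2) M_def by simp
  then have Tb: "(\<Sum>m\<in>tuples es. (T m)^2) \<le> real d ^ (k - M) * S^2"
    using d1 by (simp add: mult_le_cancel_left_pos)
  have "frob_norm d k A \<le> sqrt (real d ^ (k - M) * S^2)"
    unfolding frob_norm_def using frob_le Tb by simp
  also have "\<dots> = real d powr (real (k - M) / 2) * S"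
    using d1 S0 by (simp add: real_sqrt_mult powr_realpow[symmetric] powr_half_sqrt[symmetric] powr_powr)
  finally have fr: "frob_norm d k A \<le> real d powr (real (k - M) / 2) * S" .
  have "real d powr (- (real k - of_int \<lceil>real k / real l\<rceil>) / 2) * frob_norm d k A
      \<le> real d powr (- (real k - of_int \<lceil>real k / real l\<rceil>) / 2) * (real d powr (real (k - M) / 2) * S)"
    using fr by (intro mult_left_mono) auto
  also have "\<dots> = real d powr ((- (real k - of_int \<lceil>real k / real l\<rceil>) / 2) + real (k - M) / 2) * S"
    using d1 by (simp add: powr_add)
  also have "\<dots> \<le> real d powr 0 * S"
    using d1 S0 ceilM Mk by (intro mult_right_mono powr_mono) (simp_all add: of_nat_diff divide_simps)
  finally show ?thesis using d1 unfolding S_def es_def T_def by simp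
qed



lemma set_partitions_fin: "finite (set_partitions k l)"
proof -
  have "set_partitions k l \<subseteq> Pow (Pow {..<k})"
    by (auto simp: set_partitions_def dest: partition_onD1)
  then show ?thesis by (rule finite_subset) simp
qed

lemma set_partitions_ne:
  assumes "1 \<le> l" "l \<le> k"
  shows "set_partitions k l \<noteq> {}"
proof -
  define P0 where "P0 = insert {l-1..<k} ((\<lambda>i. {i}) ` {..<l-1})"
  have notin: "{l-1..<k} \<notin> (\<lambda>i. {i}) ` {..<l-1}"
  proof
    assume "{l-1..<k} \<in> (\<lambda>i. {i}) ` {..<l-1}"
    then obtain i where "i < l - 1" "{l-1..<k} = {i}" by auto
    moreover have "l - 1 \<in> {l-1..<k}" using assms by auto
    ultimately show False by auto
  qed
  have cardP0: "card P0 = l"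
    unfolding P0_def using notin assms by (simp add: card_image)
  have part: "partition_on {..<k} P0"
  proof (rule partition_onI)
    show "\<Union>P0 = {..<k}" unfolding P0_def using assms by auto
    show "{} \<notin> P0" unfolding P0_def using assms by auto
    fix p q assume "p \<in> P0" "q \<in> P0" "p \<noteq> q"
    then show "disjnt p q" unfolding P0_def by (auto simp: disjnt_def)
  qed
  show ?thesis using part cardP0 unfolding set_partitions_def by blast
qed

theorem corollary4p14:
  fixes d k l :: nat and A :: "nat list \<Rightarrow> real"
  assumes "d \<ge> 1" and "1 \<le> l" and "l \<le> k"
  shows "real d powr (- (real k - of_int \<lceil>real k / real l\<rceil>) / 2) * frob_norm d k A
         \<le> Min ((\<lambda>P. spectral_norm (unfold_dims d P) (unfold d k P A)) ` set_partitions k l)"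
proof -
  have "Min ((\<lambda>P. spectral_norm (unfold_dims d P) (unfold d k P A)) ` set_partitions k l)
    \<in> (\<lambda>P. spectral_norm (unfold_dims d P) (unfold d k P A)) ` set_partitions k l"
    using set_partitions_fin set_partitions_ne[OF assms(2,3)] by (intro Min_in) auto
  then obtain P where "P \<in> set_partitions k l"
    "Min ((\<lambda>P. spectral_norm (unfold_dims d P) (unfold d k P A)) ` set_partitions k l)
     = spectral_norm (unfold_dims d P) (unfold d k P A)" by auto
  then show ?thesis using main_P[OF assms(1,2)] by simp
qed


end
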